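(* Let $\alpha>0$. Then there exists a unique $\tilde\theta_\alpha\in(0,\theta^+_\alpha)\cap(0,\frac\pi4)$ such that $L(\alpha,\tilde\theta_\alpha)=0$.
   Context: For $\alpha>0$ and $\theta\in\mathbb{R}$ set $C_{\alpha,\theta}=\frac{\sin(2\theta)}{2\alpha}$ and $P_{\alpha,\theta}(x)=\alpha^2+\cos(2\theta)x^2-C_{\alpha,\theta}^2x^4$. Let $\theta^+_\alpha=\pi/2$ if $\alpha>1$, and $\theta^+_\alpha=\frac12\arccos(1-2\alpha^2)$ if $\alpha\le1$. Let $\Omega=\{(\alpha,\theta):\alpha>0,|\theta|<\theta^+_\alpha\}$; on $\Omega$ one has $P_{\alpha,\theta}>0$ on $[-1,1]$. For $(\alpha,\theta)\in\Omega$ define $$L(\alpha,\theta)=\int_{-1}^1\frac{2\alpha C_{\alpha,\theta}^2x^2-\alpha\cos(2\theta)+C_{\alpha,\theta}^2x^2\sqrt{P_{\alpha,\theta}(x)}}{\sqrt{(1-x^2)P_{\alpha,\theta}(x)}\,\big(\alpha+\sqrt{P_{\alpha,\theta}(x)}\big)}\,dx.$$ *)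

theory Defs
  imports "HOL-Analysis.Analysis"
begin

definition Cconst :: "real \<Rightarrow> real \<Rightarrow> real" where
  "Cconst \<alpha> \<theta> = sin (2 * \<theta>) / (2 * \<alpha>)"

definition Ppoly :: "real \<Rightarrow> real \<Rightarrow> real \<Rightarrow> real" where
  "Ppoly \<alpha> \<theta> x = \<alpha>^2 + cos (2 * \<theta>) * x^2 - (Cconst \<alpha> \<theta>)^2 * x^4"

definition theta_plus :: "real \<Rightarrow> real" where
  "theta_plus \<alpha> = (if \<alpha> > 1 then pi / 2 else arccos (1 - 2 * \<alpha>^2) / 2)"

definition Omega :: "(real \<times> real) set" where
  "Omega = {(\<alpha>, \<theta>). \<alpha> > 0 \<and> \<bar>\<theta>\<bar> < theta_plus \<alpha>}"

(* The integrand of L; the integral over [-1,1] is an (absolutely convergent)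
   improper integral, taken here as the Lebesgue integral over [-1,1]. *)
definition Lintegrand :: "real \<Rightarrow> real \<Rightarrow> real \<Rightarrow> real" where
  "Lintegrand \<alpha> \<theta> x =
     (2 * \<alpha> * (Cconst \<alpha> \<theta>)^2 * x^2 - \<alpha> * cos (2 * \<theta>)
       + (Cconst \<alpha> \<theta>)^2 * x^2 * sqrt (Ppoly \<alpha> \<theta> x))
     / (sqrt ((1 - x^2) * Ppoly \<alpha> \<theta> x) * (\<alpha> + sqrt (Ppoly \<alpha> \<theta> x)))"

definition Lfun :: "real \<Rightarrow> real \<Rightarrow> real" where
  "Lfun \<alpha> \<theta> = (LBINT x=-1..1. Lintegrand \<alpha> \<theta> x)"

end

theory Submission
  imports Defs
begin

definition good :: "real \<Rightarrow> real \<Rightarrow> bool" where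
  "good \<alpha> \<theta> \<longleftrightarrow> 0 \<le> \<theta> \<and> \<theta> \<le> pi/4 \<and> \<theta> < theta_plus \<alpha>"

lemma C2_eq: "\<alpha> > 0 \<Longrightarrow> (Cconst \<alpha> \<theta>)^2 = (1 - (cos (2*\<theta>))^2) / (4*\<alpha>^2)"
  unfolding Cconst_def by (simp add: power_divide sin_squared_eq power_mult_distrib)

lemma P_decomp: "Ppoly \<alpha> \<theta> x = (1 - x^2) * (\<alpha>^2 + (Cconst \<alpha> \<theta>)^2 * x^2)
    + x^2 * (\<alpha>^2 + cos (2*\<theta>) - (Cconst \<alpha> \<theta>)^2)"
  unfolding Ppoly_def by (simp add: algebra_simps power4_eq_xxxx power2_eq_square)

lemma cos_gt: assumes "\<alpha> > 0" "good \<alpha> \<theta>" shows "cos (2*\<theta>) > 1 - 2*\<alpha>^2" "cos (2*\<theta>) \<ge> 0"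
proof -
  show c0: "cos (2*\<theta>) \<ge> 0" using assms(2) unfolding good_def by (intro cos_ge_zero) auto
  show "cos (2*\<theta>) > 1 - 2*\<alpha>^2"
  proof (cases "\<alpha> > 1")
    case True
    then have "\<alpha>^2 > 1" by (simp add: one_less_power)
    then show ?thesis using c0 by linarith
  next
    case False
    have a1: "\<alpha>^2 \<le> 1" using False assms(1) by (simp add: power_le_one)
    let ?v = "1 - 2*\<alpha>^2"
    have v: "-1 \<le> ?v" "?v \<le> 1" using a1 by auto
    have "2*\<theta> < arccos ?v" using assms(2) False unfolding good_def theta_plus_def by auto
    moreover have "arccos ?v \<le> pi" using arccos_bounded[OF v] by auto
    moreover have "0 \<le> 2*\<theta>" using assms(2) unfolding good_def by auto
    ultimately have "cos (arccos ?v) < cos (2*\<theta>)" by (intro cos_monotone_0_pi) auto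
    then show ?thesis using v by simp
  qed
qed

lemma P1_pos: assumes "\<alpha> > 0" "good \<alpha> \<theta>"
  shows "\<alpha>^2 + cos (2*\<theta>) - (Cconst \<alpha> \<theta>)^2 > 0"
proof -
  let ?c = "cos (2*\<theta>)"
  have c: "?c + 2*\<alpha>^2 > 1" "?c \<ge> 0" using cos_gt[OF assms] by auto
  have a: "\<alpha>^2 > 0" using assms by auto
  have "(?c + 2*\<alpha>^2)^2 > 1"
    using c by (metis less_trans one_less_power pos2 zero_less_one)
  then have "\<alpha>^2 + ?c - (1 - ?c^2) / (4*\<alpha>^2) > 0"
    using a by (simp add: field_simps power2_eq_square)
  then show ?thesis using C2_eq[OF assms(1)] by simp
qed

lemma P_pos: assumes "\<alpha> > 0" "good \<alpha> \<theta>" "\<bar>x\<bar> \<le> 1"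
  shows "Ppoly \<alpha> \<theta> x > 0"
proof -
  have x2: "x^2 \<le> 1" using assms(3) by (metis abs_le_square_iff abs_one one_power2)
  have p1: "\<alpha>^2 + cos (2*\<theta>) - (Cconst \<alpha> \<theta>)^2 > 0" by (rule P1_pos[OF assms(1,2)])
  have t2: "x^2 * (\<alpha>^2 + cos (2*\<theta>) - (Cconst \<alpha> \<theta>)^2) \<ge> 0" using p1 by simp
  show ?thesis
  proof (cases "x^2 = 1")
    case True
    then show ?thesis using p1 P_decomp[of \<alpha> \<theta> x] by simp
  next
    case False
    then have "1 - x^2 > 0" using x2 by auto
    moreover have "\<alpha>^2 + (Cconst \<alpha> \<theta>)^2 * x^2 > 0" using assms(1)
      by (simp add: add_pos_nonneg)
    ultimately have "(1 - x^2) * (\<alpha>^2 + (Cconst \<alpha> \<theta>)^2 * x^2) > 0" by simp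
    then show ?thesis using t2 P_decomp[of \<alpha> \<theta> x] by linarith
  qed
qed

lemma alg1:
  fixes \<alpha> q c u y :: real
  assumes "\<alpha> > 0" "q > 0" "q^2 = \<alpha>^2 + c*y - u*y^2"
  shows "(2*\<alpha>*u*y - \<alpha>*c + u*y*q) / (q*(\<alpha>+q)) * y = (\<alpha>^2 + u*y^2)/q - \<alpha>"
proof -
  have "(\<alpha>+q)*(\<alpha>^2 + u*y^2 - \<alpha>*q) = \<alpha>^3 + \<alpha>*u*y^2 + q*u*y^2 - \<alpha>*q^2"
    by (simp add: algebra_simps power2_eq_square power3_eq_cube)
  also have "\<dots> = \<alpha>^3 + \<alpha>*u*y^2 + q*u*y^2 - \<alpha>*(\<alpha>^2 + c*y - u*y^2)" using assms(3) by simp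
  also have "\<dots> = (2*\<alpha>*u*y - \<alpha>*c + u*y*q) * y"
    by (simp add: algebra_simps power2_eq_square power3_eq_cube)
  finally have e: "(2*\<alpha>*u*y - \<alpha>*c + u*y*q) * y = (\<alpha>+q)*(\<alpha>^2 + u*y^2 - \<alpha>*q)" by simp
  have ne: "\<alpha> + q \<noteq> 0" using assms by simp
  have "(2*\<alpha>*u*y - \<alpha>*c + u*y*q) / (q*(\<alpha>+q)) * y = ((2*\<alpha>*u*y - \<alpha>*c + u*y*q) * y) / (q*(\<alpha>+q))"
    by simp
  also have "\<dots> = ((\<alpha>+q)*(\<alpha>^2 + u*y^2 - \<alpha>*q)) / ((\<alpha>+q)*q)" using e by (simp add: ac_simps)
  also have "\<dots> = (\<alpha>^2 + u*y^2 - \<alpha>*q) / q" using ne by simp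
  also have "\<dots> = (\<alpha>^2 + u*y^2)/q - \<alpha>" using assms(2) by (simp add: diff_divide_distrib)
  finally show ?thesis .
qed

lemma alg2:
  fixes \<alpha> q c u y :: real
  assumes "\<alpha> > 0" "q > 0" "q^2 = \<alpha>^2 + c*y - u*y^2" "u \<ge> 0" "y \<ge> 0"
  shows "(2*\<alpha>*u*y - \<alpha>*c + u*y*q) / (q*(\<alpha>+q))
       = (3*\<alpha>^2*u*y + u^2*y^3 - \<alpha>^2*c) / (q*(\<alpha>^2 + u*y^2 + \<alpha>*q))"
proof -
  have d1: "\<alpha> + q > 0" using assms by simp
  have d2: "\<alpha>^2 + u*y^2 + \<alpha>*q > 0" using assms by (simp add: add_pos_nonneg)
  have "(2*\<alpha>*u*y - \<alpha>*c + u*y*q) * (\<alpha>^2 + u*y^2 + \<alpha>*q)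
      = (3*\<alpha>^2*u*y + u^2*y^3 - \<alpha>^2*c) * (\<alpha>+q) + (u*y + \<alpha>*u*y - \<alpha>*c)*0"
  proof -
    have "(2*\<alpha>*u*y - \<alpha>*c + u*y*q) * (\<alpha>^2 + u*y^2 + \<alpha>*q) - (3*\<alpha>^2*u*y + u^2*y^3 - \<alpha>^2*c) * (\<alpha>+q)
        = (\<alpha>*u*y) * (q^2 - (\<alpha>^2 + c*y - u*y^2)) * 1 + 0"
      by (simp add: algebra_simps power2_eq_square power3_eq_cube)
    then show ?thesis using assms(3) by simp
  qed
  then have e: "(2*\<alpha>*u*y - \<alpha>*c + u*y*q) * (\<alpha>^2 + u*y^2 + \<alpha>*q)
      = (3*\<alpha>^2*u*y + u^2*y^3 - \<alpha>^2*c) * (\<alpha>+q)" by simp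
  show ?thesis
  proof (subst frac_eq_eq)
    show "q * (\<alpha> + q) \<noteq> 0" "q * (\<alpha>^2 + u*y^2 + \<alpha>*q) \<noteq> 0" using d1 d2 assms(2) by auto
    have "(2*\<alpha>*u*y - \<alpha>*c + u*y*q) * (q * (\<alpha>^2 + u*y^2 + \<alpha>*q))
       = q * ((2*\<alpha>*u*y - \<alpha>*c + u*y*q) * (\<alpha>^2 + u*y^2 + \<alpha>*q))" by (simp only: ac_simps)
    also have "\<dots> = q * ((3*\<alpha>^2*u*y + u^2*y^3 - \<alpha>^2*c) * (\<alpha>+q))" using e by simp
    finally show "(2*\<alpha>*u*y - \<alpha>*c + u*y*q) * (q * (\<alpha>^2 + u*y^2 + \<alpha>*q))
       = (3*\<alpha>^2*u*y + u^2*y^3 - \<alpha>^2*c) * (q * (\<alpha> + q))" by (simp only: ac_simps)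
  qed
qed

definition Hf :: "real \<Rightarrow> real \<Rightarrow> real \<Rightarrow> real" where
  "Hf \<alpha> \<theta> \<phi> = (2*\<alpha>*(Cconst \<alpha> \<theta>)^2*(sin \<phi>)^2 - \<alpha>*cos(2*\<theta>)
      + (Cconst \<alpha> \<theta>)^2*(sin \<phi>)^2* sqrt(Ppoly \<alpha> \<theta> (sin \<phi>)))
     / (sqrt(Ppoly \<alpha> \<theta> (sin \<phi>)) * (\<alpha> + sqrt(Ppoly \<alpha> \<theta> (sin \<phi>))))"

lemma Pq: "Ppoly \<alpha> \<theta> x = \<alpha>^2 + cos(2*\<theta>)*(x^2) - (Cconst \<alpha> \<theta>)^2 * (x^2)^2"
  unfolding Ppoly_def by (simp add: power_mult[symmetric])

lemma sinabs: "\<bar>sin (\<phi>::real)\<bar> \<le> 1" using sin_le_one[of \<phi>] sin_ge_minus_one[of \<phi>] by linarith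

lemma q_facts: assumes "\<alpha> > 0" "good \<alpha> \<theta>"
  shows "sqrt (Ppoly \<alpha> \<theta> (sin \<phi>)) > 0"
    "(sqrt (Ppoly \<alpha> \<theta> (sin \<phi>)))^2 = \<alpha>^2 + cos(2*\<theta>)*(sin \<phi>)^2 - (Cconst \<alpha> \<theta>)^2 * ((sin \<phi>)^2)^2"
proof -
  have p: "Ppoly \<alpha> \<theta> (sin \<phi>) > 0" by (rule P_pos[OF assms sinabs])
  then show "sqrt (Ppoly \<alpha> \<theta> (sin \<phi>)) > 0" by simp
  show "(sqrt (Ppoly \<alpha> \<theta> (sin \<phi>)))^2 = \<alpha>^2 + cos(2*\<theta>)*(sin \<phi>)^2 - (Cconst \<alpha> \<theta>)^2 * ((sin \<phi>)^2)^2"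
    using p Pq[of \<alpha> \<theta> "sin \<phi>"] by simp
qed

lemma cu_mono: assumes "\<alpha> > 0" "good \<alpha> \<theta>" "good \<alpha> \<theta>'" "\<theta> < \<theta>'"
  shows "cos (2*\<theta>') < cos (2*\<theta>)" "(Cconst \<alpha> \<theta>)^2 \<le> (Cconst \<alpha> \<theta>')^2"
proof -
  show "cos (2*\<theta>') < cos (2*\<theta>)" using assms unfolding good_def
    by (intro cos_monotone_0_pi) auto
  have s0: "0 \<le> sin (2*\<theta>)" using assms unfolding good_def by (intro sin_ge_zero) auto
  have "sin (2*\<theta>) \<le> sin (2*\<theta>')" using assms unfolding good_def
    by (intro sin_monotone_2pi_le) auto
  then have "(sin (2*\<theta>))^2 \<le> (sin (2*\<theta>'))^2" using s0 by (intro power_mono) auto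
  then show "(Cconst \<alpha> \<theta>)^2 \<le> (Cconst \<alpha> \<theta>')^2" unfolding Cconst_def
    by (simp add: power_divide divide_right_mono)
qed

lemma H_mono: assumes "\<alpha> > 0" "good \<alpha> \<theta>" "good \<alpha> \<theta>'" "\<theta> < \<theta>'"
  shows "Hf \<alpha> \<theta> \<phi> < Hf \<alpha> \<theta>' \<phi>"
proof -
  define y where "y = (sin \<phi>)^2"
  define q where "q = sqrt (Ppoly \<alpha> \<theta> (sin \<phi>))"
  define q' where "q' = sqrt (Ppoly \<alpha> \<theta>' (sin \<phi>))"
  define u where "u = (Cconst \<alpha> \<theta>)^2"
  define u' where "u' = (Cconst \<alpha> \<theta>')^2"
  define c where "c = cos (2*\<theta>)"
  define c' where "c' = cos (2*\<theta>')"
  have q: "q > 0" "q^2 = \<alpha>^2 + c*y - u*y^2" using q_facts[OF assms(1,2)] unfolding q_def c_def u_def y_def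
    by (auto simp: algebra_simps)
  have q': "q' > 0" "q'^2 = \<alpha>^2 + c'*y - u'*y^2" using q_facts[OF assms(1,3)] unfolding q'_def c'_def u'_def y_def
    by (auto simp: algebra_simps)
  have cc: "c' < c" and uu: "u \<le> u'" using cu_mono[OF assms] unfolding c_def c'_def u_def u'_def by auto
  have y0: "y \<ge> 0" unfolding y_def by simp
  have u0: "u \<ge> 0" unfolding u_def by simp
  have H: "Hf \<alpha> \<theta> \<phi> = (2*\<alpha>*u*y - \<alpha>*c + u*y*q) / (q*(\<alpha>+q))"
    unfolding Hf_def y_def q_def u_def c_def by (simp add: ac_simps)
  have H': "Hf \<alpha> \<theta>' \<phi> = (2*\<alpha>*u'*y - \<alpha>*c' + u'*y*q') / (q'*(\<alpha>+q'))"
    unfolding Hf_def y_def q'_def u'_def c'_def by (simp add: ac_simps)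
  show ?thesis
  proof (cases "y = 0")
    case True
    then have "q^2 = \<alpha>^2" "q'^2 = \<alpha>^2" using q q' by auto
    then have "q = \<alpha>" "q' = \<alpha>" using q(1) q'(1) assms(1) by (auto simp: power2_eq_iff)
    then show ?thesis unfolding H H' using True cc assms(1)
      by (simp add: divide_strict_right_mono)
  next
    case False
    then have yp: "y > 0" using y0 by auto
    have "c'*y < c*y" using cc yp by simp
    moreover have "u*y^2 \<le> u'*y^2" using uu by (simp add: mult_right_mono)
    ultimately have "q'^2 < q^2" unfolding q q' by linarith
    then have qq: "q' < q" using q(1) q'(1) by (simp add: power_less_imp_less_base)
    have n0: "\<alpha>^2 + u*y^2 > 0" using assms(1) u0 by (simp add: add_pos_nonneg)
    have "(\<alpha>^2 + u*y^2)/q < (\<alpha>^2 + u*y^2)/q'" using qq q'(1) n0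
      by (simp add: divide_strict_left_mono)
    also have "\<dots> \<le> (\<alpha>^2 + u'*y^2)/q'" using uu q'(1)
      by (simp add: divide_right_mono mult_right_mono)
    finally have "Hf \<alpha> \<theta> \<phi> * y < Hf \<alpha> \<theta>' \<phi> * y"
      unfolding H H' alg1[OF assms(1) q] alg1[OF assms(1) q'] by simp
    then show ?thesis using yp by simp
  qed
qed

lemma H_cont: assumes "\<alpha> > 0" "\<And>\<theta>. \<theta> \<in> U \<Longrightarrow> good \<alpha> \<theta>"
  shows "continuous_on (U \<times> S) (\<lambda>(\<theta>, \<phi>). Hf \<alpha> \<theta> \<phi>)"
proof -
  have pos: "Ppoly \<alpha> (fst z) (sin (snd z)) > 0" if "z \<in> U \<times> S" for z
    using P_pos[OF assms(1) assms(2) sinabs] that by auto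
  have dn: "sqrt (Ppoly \<alpha> (fst z) (sin (snd z))) * (\<alpha> + sqrt (Ppoly \<alpha> (fst z) (sin (snd z)))) \<noteq> 0"
    if "z \<in> U \<times> S" for z
  proof -
    have "sqrt (Ppoly \<alpha> (fst z) (sin (snd z))) > 0" using pos[OF that] by simp
    then show ?thesis using assms(1) by (metis add_pos_pos less_irrefl mult_pos_pos)
  qed
  have cP: "continuous_on (U \<times> S) (\<lambda>z. Ppoly \<alpha> (fst z) (sin (snd z)))"
    unfolding Ppoly_def Cconst_def by (intro continuous_intros) (use assms(1) in auto)
  have "continuous_on (U \<times> S) (\<lambda>z. Hf \<alpha> (fst z) (snd z))"
    unfolding Hf_def Cconst_def
    by (intro continuous_intros cP) (use dn assms(1) in auto)
  then show ?thesis by (simp add: case_prod_beta')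
qed

lemma H_cont1: assumes "\<alpha> > 0" "good \<alpha> \<theta>"
  shows "continuous_on S (Hf \<alpha> \<theta>)"
proof -
  have "continuous_on ({\<theta>} \<times> S) (\<lambda>(\<theta>, \<phi>). Hf \<alpha> \<theta> \<phi>)" by (rule H_cont) (use assms in auto)
  then have "continuous_on S (\<lambda>\<phi>. (\<lambda>(\<theta>, \<phi>). Hf \<alpha> \<theta> \<phi>) (\<theta>, \<phi>))"
    by (rule continuous_on_compose2) (auto intro!: continuous_intros)
  then show ?thesis by simp
qed

lemma subst_gen:
  fixes f h :: "real \<Rightarrow> real"
  assumes contf: "\<And>x. -1 < x \<Longrightarrow> x < 1 \<Longrightarrow> isCont f x"
    and conth: "continuous_on {-pi/2..pi/2} h"
    and rel: "\<And>\<phi>. -pi/2 < \<phi> \<Longrightarrow> \<phi> < pi/2 \<Longrightarrow> f (sin \<phi>) * cos \<phi> = h \<phi>"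
    and nonneg: "\<And>\<phi>. -pi/2 < \<phi> \<Longrightarrow> \<phi> < pi/2 \<Longrightarrow> h \<phi> \<ge> 0"
  shows "set_integrable lborel (einterval (-1) 1) f" "(LBINT x=-1..1. f x) = integral {-pi/2..pi/2} h"
proof -
  have ab: "ereal (-pi/2) < ereal (pi/2)" by simp
  have cospos: "cos x > 0" if "ereal (-pi/2) < ereal x" "ereal x < ereal (pi/2)" for x
    using that by (intro cos_gt_zero_pi) auto
  have sinin: "-1 < sin x \<and> sin x < 1" if "ereal (-pi/2) < ereal x" "ereal x < ereal (pi/2)" for x
  proof -
    have "sin (-pi/2) < sin x" "sin x < sin (pi/2)" using that by (intro sin_monotone_2pi; simp)+
    then show ?thesis by simp
  qed
  have A: "((ereal \<circ> sin \<circ> real_of_ereal) \<longlongrightarrow> -1) (at_right (ereal (-pi/2)))"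
  proof -
    have "((\<lambda>x. sin x) \<longlongrightarrow> sin (-pi/2)) (at_right (-pi/2))" by (intro tendsto_intros)
    then have "((\<lambda>x. ereal (sin x)) \<longlongrightarrow> ereal (-1)) (at_right (-pi/2))" by (simp add: lim_ereal)
    then have "(((\<lambda>x. ereal (sin x)) \<circ> real_of_ereal) \<longlongrightarrow> ereal (-1)) (at_right (ereal (-pi/2)))"
      unfolding ereal_tendsto_simps1 .
    moreover have "(-1::ereal) = ereal (-1)" by (simp add: one_ereal_def)
    moreover have "ereal \<circ> sin \<circ> real_of_ereal = (\<lambda>x. ereal (sin x)) \<circ> real_of_ereal" by (simp add: o_def)
    ultimately show ?thesis by simp
  qed
  have B: "((ereal \<circ> sin \<circ> real_of_ereal) \<longlongrightarrow> 1) (at_left (ereal (pi/2)))"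
  proof -
    have "((\<lambda>x. sin x) \<longlongrightarrow> sin (pi/2)) (at_left (pi/2))" by (intro tendsto_intros)
    then have "((\<lambda>x. ereal (sin x)) \<longlongrightarrow> ereal 1) (at_left (pi/2))" by (simp add: lim_ereal)
    then have "(((\<lambda>x. ereal (sin x)) \<circ> real_of_ereal) \<longlongrightarrow> ereal (1)) (at_left (ereal (pi/2)))"
      unfolding ereal_tendsto_simps1 .
    moreover have "(1::ereal) = ereal (1)" by (simp add: one_ereal_def)
    moreover have "ereal \<circ> sin \<circ> real_of_ereal = (\<lambda>x. ereal (sin x)) \<circ> real_of_ereal" by (simp add: o_def)
    ultimately show ?thesis by simp
  qed
  have hint: "set_integrable lborel {-pi/2..pi/2} h"
    by (rule borel_integrable_atLeastAtMost') (rule conth)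
  have hint2: "set_integrable lborel (einterval (ereal (-pi/2)) (ereal (pi/2))) h"
    by (rule set_integrable_subset[OF hint]) (auto simp: einterval_eq)
  have fgint: "set_integrable lborel (einterval (ereal (-pi/2)) (ereal (pi/2))) (\<lambda>x. f (sin x) * cos x)"
  proof -
    have "set_integrable lborel (einterval (ereal (-pi/2)) (ereal (pi/2))) (\<lambda>x. f (sin x) * cos x)
      \<longleftrightarrow> set_integrable lborel (einterval (ereal (-pi/2)) (ereal (pi/2))) h"
    proof -
      have "(\<lambda>x. indicat_real (einterval (ereal (-pi/2)) (ereal (pi/2))) x *\<^sub>R (f (sin x) * cos x))
         = (\<lambda>x. indicat_real (einterval (ereal (-pi/2)) (ereal (pi/2))) x *\<^sub>R h x)"
        by (rule ext) (auto simp: einterval_eq indicator_def rel)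
      then show ?thesis unfolding set_integrable_def by simp
    qed
    then show ?thesis using hint2 by simp
  qed
  note S = interval_integral_substitution_nonneg[of "ereal (-pi/2)" "ereal (pi/2)" sin cos f "-1" "1",
    OF ab _ _ _ _ _ A B fgint]
  have p1: "DERIV sin x :> cos (x::real)" for x by (rule DERIV_sin)
  have p2: "isCont f (sin x)" if x: "ereal (-pi/2) < ereal x" "ereal x < ereal (pi/2)" for x
    using sinin[OF x] contf by auto
  have p3: "isCont cos (x::real)" for x by (rule isCont_cos)
  have p4: "0 \<le> f (sin x)" if x: "ereal (-pi/2) < ereal x" "ereal x < ereal (pi/2)" for x
  proof -
    have "f (sin x) * cos x \<ge> 0" using rel nonneg x by auto
    then show "0 \<le> f (sin x)" using cospos[OF x] by (simp add: zero_le_mult_iff)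
  qed
  have p5: "0 \<le> cos x" if x: "ereal (-pi/2) \<le> ereal x" "ereal x \<le> ereal (pi/2)" for x
    using x by (intro cos_ge_zero) auto
  note S' = S[OF p1 p2 p3 p4 p5]
  have S1: "set_integrable lborel (einterval (-1) 1) f \<and>
     (LBINT x=-1..1. f x) = (LBINT x=ereal (-pi/2)..ereal (pi/2). f (sin x) * cos x)"
    using S' by blast
  then show "set_integrable lborel (einterval (-1) 1) f" by simp
  have "(LBINT x=ereal (-pi/2)..ereal (pi/2). f (sin x) * cos x) = (LBINT x=ereal (-pi/2)..ereal (pi/2). h x)"
    by (rule interval_integral_cong) (auto simp: einterval_eq rel)
  also have "\<dots> = integral {-pi/2..pi/2} h"
    by (rule interval_integral_eq_integral) (use hint in auto)
  finally show "(LBINT x=-1..1. f x) = integral {-pi/2..pi/2} h" using S1 by simp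
qed

lemma L_rel: assumes "\<alpha> > 0" "good \<alpha> \<theta>" "-pi/2 < \<phi>" "\<phi> < pi/2"
  shows "Lintegrand \<alpha> \<theta> (sin \<phi>) * cos \<phi> = Hf \<alpha> \<theta> \<phi>"
proof -
  have cp: "cos \<phi> > 0" using assms by (intro cos_gt_zero_pi) auto
  have p: "Ppoly \<alpha> \<theta> (sin \<phi>) > 0" by (rule P_pos[OF assms(1,2) sinabs])
  define q where "q = sqrt (Ppoly \<alpha> \<theta> (sin \<phi>))"
  define N where "N = 2*\<alpha>*(Cconst \<alpha> \<theta>)^2*(sin \<phi>)^2 - \<alpha>*cos(2*\<theta>)
      + (Cconst \<alpha> \<theta>)^2*(sin \<phi>)^2 * q"
  have "sqrt ((1 - (sin \<phi>)^2) * Ppoly \<alpha> \<theta> (sin \<phi>)) = cos \<phi> * q"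
    using cp unfolding q_def by (simp add: real_sqrt_mult cos_squared_eq[symmetric])
  then have "Lintegrand \<alpha> \<theta> (sin \<phi>) = N / (cos \<phi> * q * (\<alpha> + q))"
    unfolding Lintegrand_def N_def q_def by simp
  also have "\<dots> = (N / (q * (\<alpha> + q))) / cos \<phi>" by (simp add: ac_simps)
  finally have "Lintegrand \<alpha> \<theta> (sin \<phi>) * cos \<phi> = N / (q * (\<alpha> + q))" using cp by simp
  then show ?thesis unfolding Hf_def N_def q_def .
qed

lemma L_cont: assumes "\<alpha> > 0" "good \<alpha> \<theta>" "-1 < x" "x < 1"
  shows "isCont (Lintegrand \<alpha> \<theta>) x"
proof -
  have p: "Ppoly \<alpha> \<theta> x > 0" using assms by (intro P_pos[OF assms(1,2)]) auto
  have x2: "1 - x^2 > 0" using assms by (simp add: abs_square_less_1)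
  have cP: "isCont (\<lambda>x. Ppoly \<alpha> \<theta> x) x" unfolding Ppoly_def by (intro continuous_intros)
  have dn: "sqrt ((1 - x^2) * Ppoly \<alpha> \<theta> x) * (\<alpha> + sqrt (Ppoly \<alpha> \<theta> x)) \<noteq> 0"
  proof -
    have "sqrt ((1 - x^2) * Ppoly \<alpha> \<theta> x) > 0" using p x2 by simp
    moreover have "\<alpha> + sqrt (Ppoly \<alpha> \<theta> x) > 0" using assms(1) p by (simp add: add_pos_pos)
    ultimately show ?thesis by (metis mult_pos_pos less_irrefl)
  qed
  show ?thesis unfolding Lintegrand_def
    by (intro continuous_intros cP dn)
qed

lemma Lfun_eq: assumes "\<alpha> > 0" "good \<alpha> \<theta>"
  shows "Lfun \<alpha> \<theta> = integral {-pi/2..pi/2} (Hf \<alpha> \<theta>)"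
proof -
  have ch: "continuous_on {-pi/2..pi/2} (Hf \<alpha> \<theta>)" by (rule H_cont1[OF assms])
  obtain m where m: "m \<in> {-pi/2..pi/2}" "\<And>y. y \<in> {-pi/2..pi/2} \<Longrightarrow> Hf \<alpha> \<theta> m \<le> Hf \<alpha> \<theta> y"
    using continuous_attains_inf[OF compact_Icc _ ch] by auto
  define K where "K = \<bar>Hf \<alpha> \<theta> m\<bar>"
  have K0: "K \<ge> 0" unfolding K_def by simp
  have HK: "Hf \<alpha> \<theta> y + K \<ge> 0" if "y \<in> {-pi/2..pi/2}" for y
    using m(2)[OF that] unfolding K_def by linarith
  define f2 where "f2 = (\<lambda>x::real. K / sqrt (1 - x^2))"
  define f1 where "f1 = (\<lambda>x. Lintegrand \<alpha> \<theta> x + f2 x)"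
  have c2: "isCont f2 x" if "-1 < x" "x < 1" for x
  proof -
    have "1 - x^2 > 0" using that by (simp add: abs_square_less_1)
    then show ?thesis unfolding f2_def by (intro continuous_intros) auto
  qed
  have r2: "f2 (sin \<phi>) * cos \<phi> = K" if "-pi/2 < \<phi>" "\<phi> < pi/2" for \<phi>
  proof -
    have cp: "cos \<phi> > 0" using that by (intro cos_gt_zero_pi) auto
    then show ?thesis unfolding f2_def by (simp add: cos_squared_eq[symmetric])
  qed
  have I2: "set_integrable lborel (einterval (-1) 1) f2" "(LBINT x=-1..1. f2 x) = integral {-pi/2..pi/2} (\<lambda>_. K)"
    by (rule subst_gen[where h="\<lambda>_. K"]; (rule c2 | rule r2 | use K0 in simp)?; simp)+
  have I1: "set_integrable lborel (einterval (-1) 1) f1"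
     "(LBINT x=-1..1. f1 x) = integral {-pi/2..pi/2} (\<lambda>\<phi>. Hf \<alpha> \<theta> \<phi> + K)"
  proof -
    have a: "isCont f1 x" if "-1 < x" "x < 1" for x
      unfolding f1_def using L_cont[OF assms that] c2[OF that] by (intro continuous_intros)
    have b: "continuous_on {-pi/2..pi/2} (\<lambda>\<phi>. Hf \<alpha> \<theta> \<phi> + K)" using ch by (intro continuous_intros)
    have c: "f1 (sin \<phi>) * cos \<phi> = Hf \<alpha> \<theta> \<phi> + K" if "-pi/2 < \<phi>" "\<phi> < pi/2" for \<phi>
      unfolding f1_def using L_rel[OF assms that] r2[OF that] by (simp add: distrib_right)
    have d: "Hf \<alpha> \<theta> \<phi> + K \<ge> 0" if "-pi/2 < \<phi>" "\<phi> < pi/2" for \<phi>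
      using HK that by auto
    show "set_integrable lborel (einterval (-1) 1) f1"
      "(LBINT x=-1..1. f1 x) = integral {-pi/2..pi/2} (\<lambda>\<phi>. Hf \<alpha> \<theta> \<phi> + K)"
      using subst_gen[OF a b c d] by auto
  qed
  have m1: "(-1::ereal) \<le> 1" by (simp add: one_ereal_def)
  have eq: "Lintegrand \<alpha> \<theta> = (\<lambda>x. f1 x - f2 x)" unfolding f1_def by auto
  have "Lfun \<alpha> \<theta> = (LBINT x=-1..1. f1 x - f2 x)" unfolding Lfun_def eq ..
  also have "\<dots> = (LBINT x=-1..1. f1 x) - (LBINT x=-1..1. f2 x)"
    by (rule interval_lebesgue_integral_diff) (use I1(1) I2(1) m1 in \<open>auto simp: interval_lebesgue_integrable_def\<close>)
  also have "\<dots> = integral {-pi/2..pi/2} (\<lambda>\<phi>. Hf \<alpha> \<theta> \<phi> + K) - integral {-pi/2..pi/2} (\<lambda>_. K)"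
    using I1(2) I2(2) by simp
  also have "\<dots> = integral {-pi/2..pi/2} (\<lambda>\<phi>. (Hf \<alpha> \<theta> \<phi> + K) - K)"
    by (rule integral_diff[symmetric]) (use ch in \<open>auto intro!: integrable_continuous_interval continuous_intros\<close>)
  finally show ?thesis by simp
qed

lemma ne_int: "{-pi/2<..<pi/2::real} \<noteq> {}"
proof -
  have "(0::real) \<in> {-pi/2<..<pi/2}" using pi_gt_zero by simp
  then show ?thesis by blast
qed

lemma tp_pos: assumes "\<alpha> > 0" shows "theta_plus \<alpha> > 0"
proof (cases "\<alpha> > 1")
  case True then show ?thesis unfolding theta_plus_def by simp
next
  case False
  have a1: "\<alpha>^2 \<le> 1" using False assms by (simp add: power_le_one)
  let ?v = "1 - 2*\<alpha>^2"
  have v: "-1 \<le> ?v" "?v \<le> 1" using a1 by auto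
  have "arccos ?v \<noteq> 0"
  proof
    assume "arccos ?v = 0"
    then have "cos (arccos ?v) = 1" by simp
    then show False using v assms by simp
  qed
  then have "arccos ?v > 0" using arccos_bounded[OF v] by auto
  then show ?thesis using False unfolding theta_plus_def by simp
qed

lemma good0: "\<alpha> > 0 \<Longrightarrow> good \<alpha> 0" unfolding good_def using tp_pos by auto

lemma I_mono: assumes "\<alpha> > 0" "good \<alpha> \<theta>" "good \<alpha> \<theta>'" "\<theta> < \<theta>'"
  shows "integral {-pi/2..pi/2} (Hf \<alpha> \<theta>) < integral {-pi/2..pi/2} (Hf \<alpha> \<theta>')"
  by (rule integral_less_real) (use H_cont1[OF assms(1,2)] H_cont1[OF assms(1,3)] H_mono[OF assms] ne_int in auto)

lemma I0_neg: assumes "\<alpha> > 0" shows "integral {-pi/2..pi/2} (Hf \<alpha> 0) < 0"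
proof -
  have "Hf \<alpha> 0 \<phi> < 0" for \<phi>
  proof -
    have q: "sqrt (Ppoly \<alpha> 0 (sin \<phi>)) > 0" using q_facts(1)[OF assms good0[OF assms]] .
    have "Hf \<alpha> 0 \<phi> = - \<alpha> / (sqrt (Ppoly \<alpha> 0 (sin \<phi>)) * (\<alpha> + sqrt (Ppoly \<alpha> 0 (sin \<phi>))))"
      unfolding Hf_def Cconst_def by simp
    moreover have "sqrt (Ppoly \<alpha> 0 (sin \<phi>)) * (\<alpha> + sqrt (Ppoly \<alpha> 0 (sin \<phi>))) > 0"
      using q assms by (intro mult_pos_pos add_pos_pos)
    ultimately show ?thesis using assms by (simp add: divide_neg_pos)
  qed
  then have "integral {-pi/2..pi/2} (Hf \<alpha> 0) < integral {-pi/2..pi/2} (\<lambda>_. 0::real)"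
    by (intro integral_less_real) (use H_cont1[OF assms good0[OF assms]] ne_int in auto)
  then show ?thesis by simp
qed

lemma caseA: assumes "\<alpha> > 0" "2*\<alpha>^2 > 1"
  shows "good \<alpha> (pi/4) \<and> integral {-pi/2..pi/2} (Hf \<alpha> (pi/4)) > 0"
proof -
  have tp: "pi/4 < theta_plus \<alpha>"
  proof (cases "\<alpha> > 1")
    case True then show ?thesis unfolding theta_plus_def by simp
  next
    case False
    have a1: "\<alpha>^2 \<le> 1" using False assms by (simp add: power_le_one)
    let ?v = "1 - 2*\<alpha>^2"
    have v: "-1 \<le> ?v" "?v \<le> 1" using a1 by auto
    have "\<not> arccos ?v \<le> pi/2"
    proof
      assume "arccos ?v \<le> pi/2"
      then have "cos (pi/2) \<le> cos (arccos ?v)" using arccos_bounded[OF v]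
        by (intro cos_monotone_0_pi_le) auto
      then show False using v assms by simp
    qed
    then show ?thesis using False unfolding theta_plus_def by simp
  qed
  then have g: "good \<alpha> (pi/4)" unfolding good_def by simp
  have c: "cos (2*(pi/4)) = 0" by simp
  have nn: "Hf \<alpha> (pi/4) \<phi> \<ge> 0" for \<phi>
  proof -
    have q: "sqrt (Ppoly \<alpha> (pi/4) (sin \<phi>)) > 0" using q_facts(1)[OF assms(1) g] .
    have "sqrt (Ppoly \<alpha> (pi/4) (sin \<phi>)) * (\<alpha> + sqrt (Ppoly \<alpha> (pi/4) (sin \<phi>))) > 0"
      using q assms(1) by (intro mult_pos_pos add_pos_pos)
    then show ?thesis unfolding Hf_def c using q assms(1) by (intro divide_nonneg_pos) auto
  qed
  have p: "Hf \<alpha> (pi/4) (pi/2) > 0"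
  proof -
    have q: "sqrt (Ppoly \<alpha> (pi/4) (sin (pi/2))) > 0" using q_facts(1)[OF assms(1) g] .
    have u: "(Cconst \<alpha> (pi/4))^2 > 0" unfolding Cconst_def using assms(1) by simp
    have "sqrt (Ppoly \<alpha> (pi/4) (sin (pi/2))) * (\<alpha> + sqrt (Ppoly \<alpha> (pi/4) (sin (pi/2)))) > 0"
      using q assms(1) by (intro mult_pos_pos add_pos_pos)
    then show ?thesis unfolding Hf_def c using q assms(1) u
      by (intro divide_pos_pos) (auto intro!: add_pos_nonneg)
  qed
  have ch: "continuous_on {-pi/2..pi/2} (Hf \<alpha> (pi/4))" by (rule H_cont1[OF assms(1) g])
  have int: "(Hf \<alpha> (pi/4)) integrable_on {-pi/2..pi/2}" by (rule integrable_continuous_interval[OF ch])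
  have ge: "integral {-pi/2..pi/2} (Hf \<alpha> (pi/4)) \<ge> 0" by (rule integral_nonneg[OF int]) (rule nn)
  have "integral {-pi/2..pi/2} (Hf \<alpha> (pi/4)) \<noteq> 0"
  proof
    assume z: "integral {-pi/2..pi/2} (Hf \<alpha> (pi/4)) = 0"
    have "(Hf \<alpha> (pi/4) has_integral 0) (cbox (-pi/2) (pi/2))"
      using int z by (metis cbox_interval integrable_integral)
    moreover have "continuous_on (cbox (-pi/2) (pi/2)) (Hf \<alpha> (pi/4))" using ch by (simp add: cbox_interval)
    moreover have "box (-pi/2) (pi/2::real) \<noteq> {}" using ne_int by (simp add: box_real)
    moreover have "pi/2 \<in> cbox (-pi/2) (pi/2::real)" by (simp add: cbox_interval)
    ultimately have "Hf \<alpha> (pi/4) (pi/2) = 0"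
      using has_integral_0_cbox_imp_0[of "-pi/2" "pi/2" "Hf \<alpha> (pi/4)"] nn by blast
    then show False using p by simp
  qed
  then show ?thesis using g ge by simp
qed


lemma HB:
  assumes a0: "\<alpha> > 0" and a1: "\<alpha> \<le> 1" and g: "good \<alpha> \<theta>"
    and uT: "(Cconst \<alpha> \<theta>)^2 \<le> 1 - \<alpha>^2"
    and M0: "3*\<alpha>^2*(Cconst \<alpha> \<theta>)^2*(15/16) + ((Cconst \<alpha> \<theta>)^2)^2*(15/16)^3 - \<alpha>^2*cos (2*\<theta>) > 1/2"
    and d0: "\<delta> > 0" and dP: "\<alpha>^2 + cos (2*\<theta>) - (Cconst \<alpha> \<theta>)^2 < \<delta>^2"
  shows "Hf \<alpha> \<theta> \<phi> \<ge> -4/\<alpha>"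
    and "pi/2 - 1/4 \<le> \<phi> \<Longrightarrow> \<phi> \<le> pi/2 \<Longrightarrow> Hf \<alpha> \<theta> \<phi> \<ge> 1/(6*(pi/2-\<phi>+\<delta>))"
proof -
  define u where "u = (Cconst \<alpha> \<theta>)^2"
  define c where "c = cos (2*\<theta>)"
  define y where "y = (sin \<phi>)^2"
  define q where "q = sqrt (Ppoly \<alpha> \<theta> (sin \<phi>))"
  define M where "M = 3*\<alpha>^2*u*y + u^2*y^3 - \<alpha>^2*c"
  define D where "D = \<alpha>^2 + u*y^2 + \<alpha>*q"
  define P1 where "P1 = \<alpha>^2 + c - u"
  have q: "q > 0" "q^2 = \<alpha>^2 + c*y - u*y^2" using q_facts[OF a0 g] unfolding q_def c_def u_def y_def
    by (auto simp: algebra_simps)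
  have u0: "u \<ge> 0" unfolding u_def by simp
  have y0: "y \<ge> 0" and y1: "y \<le> 1" unfolding y_def by (simp_all add: abs_sin_le_one abs_square_le_1)
  have c0: "c \<ge> 0" unfolding c_def using cos_gt[OF a0 g] by simp
  have c1: "c \<le> 1" unfolding c_def by simp
  have uT': "u \<le> 1 - \<alpha>^2" using uT unfolding u_def .
  have P1p: "P1 > 0" unfolding P1_def c_def u_def by (rule P1_pos[OF a0 g])
  have dP': "P1 < \<delta>^2" using dP unfolding P1_def c_def u_def .
  have H: "Hf \<alpha> \<theta> \<phi> = M / (q * D)"
  proof -
    have "Hf \<alpha> \<theta> \<phi> = (2*\<alpha>*u*y - \<alpha>*c + u*y*q) / (q*(\<alpha>+q))"
      unfolding Hf_def y_def q_def u_def c_def by (simp add: ac_simps)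
    also have "\<dots> = M / (q * D)" unfolding M_def D_def by (rule alg2[OF a0 q u0 y0])
    finally show ?thesis .
  qed
  have Dge: "D \<ge> \<alpha>^2" unfolding D_def using u0 y0 q a0 by simp
  have Dp: "D > 0" using Dge a0 by (smt (verit) zero_less_power)
  have qD: "q * D > 0" using q Dp by simp
  have dec: "q^2 = (1-y)*(\<alpha>^2 + u*y) + y*P1" unfolding q P1_def by (simp add: algebra_simps power2_eq_square)
  have Mmono: "M > 1/2" if "y \<ge> 15/16"
  proof -
    have "y^3 \<ge> (15/16)^3" using that by (intro power_mono) auto
    then have "u^2*y^3 \<ge> u^2*(15/16)^3" by (simp add: mult_left_mono)
    moreover have "3*\<alpha>^2*u*y \<ge> 3*\<alpha>^2*u*(15/16)" using that u0 by (intro mult_left_mono) auto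
    ultimately have "M \<ge> 3*\<alpha>^2*u*(15/16) + u^2*(15/16)^3 - \<alpha>^2*c" unfolding M_def by linarith
    moreover have "3*\<alpha>^2*u*(15/16) + u^2*(15/16)^3 - \<alpha>^2*c > 1/2" using M0 unfolding u_def c_def
      by (simp add: power2_eq_square)
    ultimately show ?thesis by linarith
  qed
  show "Hf \<alpha> \<theta> \<phi> \<ge> -4/\<alpha>"
  proof (cases "M \<ge> 0")
    case True
    then have "Hf \<alpha> \<theta> \<phi> \<ge> 0" unfolding H using qD by simp
    moreover have "-4/\<alpha> \<le> 0" using a0 by simp
    ultimately show ?thesis by linarith
  next
    case False
    have yl: "y < 15/16"
    proof (rule ccontr)
      assume "\<not> y < 15/16"
      then have "M > 1/2" using Mmono by simp
      then show False using False by simp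
    qed
    have t1: "(1-y)*\<alpha>^2 \<le> (1-y)*(\<alpha>^2 + u*y)" by (rule mult_left_mono) (use yl u0 y0 in auto)
    have t2: "y*P1 \<ge> 0" using y0 P1p by simp
    have t3: "(\<alpha>/4)^2 = (1/16)*\<alpha>^2" by (simp add: power_divide)
    have t4: "(1/16)*\<alpha>^2 \<le> (1-y)*\<alpha>^2" by (rule mult_right_mono) (use yl in auto)
    have "(\<alpha>/4)^2 \<le> q^2" using t1 t2 t3 t4 dec by linarith
    then have qa: "\<alpha>/4 \<le> q" by (rule power2_le_imp_le) (use q(1) in auto)
    have Mge: "M \<ge> - (\<alpha>^2)"
    proof -
      have "3*\<alpha>^2*u*y \<ge> 0" "u^2*y^3 \<ge> 0" using u0 y0 by simp_all
      moreover have "\<alpha>^2*c \<le> \<alpha>^2" using c1 by (simp add: mult_left_le)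
      ultimately show ?thesis unfolding M_def by linarith
    qed
    have s1: "M / (q*D) \<ge> (- (\<alpha>^2)) / (q*D)" by (rule divide_right_mono) (use Mge qD in auto)
    have s2: "\<alpha>^2 / (q*D) \<le> \<alpha>^2 / (q*\<alpha>^2)"
    proof -
      have "q*\<alpha>^2 \<le> q*D" using Dge q by simp
      then show ?thesis by (rule divide_left_mono) (use q a0 qD in \<open>auto intro!: mult_pos_pos\<close>)
    qed
    have s3: "\<alpha>^2 / (q*\<alpha>^2) = 1/q" using a0 by simp
    have s4: "1/q \<le> 4/\<alpha>" using qa a0 q by (simp add: field_simps)
    have s5: "(- (\<alpha>^2)) / (q*D) = - (\<alpha>^2 / (q*D))" by simp
    have s6: "-4/\<alpha> = - (4/\<alpha>)" by simp
    from s1 s2 s3 s4 s5 s6 show ?thesis unfolding H by linarith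
  qed
  assume p1: "pi/2 - 1/4 \<le> \<phi>" and p2: "\<phi> \<le> pi/2"
  have cp: "cos \<phi> \<ge> 0" by (rule cos_ge_zero) (use p1 p2 pi_gt3 in linarith)+
  have "cos \<phi> = sin (pi/2 - \<phi>)" by (simp add: sin_cos_eq)
  also have "\<dots> \<le> pi/2 - \<phi>" by (rule sin_x_le_x) (use p2 in auto)
  finally have cb: "cos \<phi> \<le> pi/2 - \<phi>" .
  have c14: "cos \<phi> \<le> 1/4" using cb p1 by linarith
  have ycos: "1 - y = (cos \<phi>)^2" unfolding y_def by (simp add: cos_squared_eq)
  have "(cos \<phi>)^2 \<le> (1/4)^2" by (rule power_mono) (use cp c14 in auto)
  then have yb: "y \<ge> 15/16" using ycos by (simp add: power2_eq_square)
  have Mh: "M > 1/2" by (rule Mmono[OF yb])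
  have h1: "(1-y)*(\<alpha>^2 + u*y) \<le> (1-y)*1"
  proof (rule mult_left_mono)
    have "u*y \<le> u" using u0 y1 by (simp add: mult_left_le)
    then show "\<alpha>^2 + u*y \<le> 1" using uT' by linarith
  qed (use y1 in auto)
  then have "(1-y)*(\<alpha>^2 + u*y) \<le> 1-y" by simp
  moreover have "y*P1 \<le> \<delta>^2"
  proof -
    have "y*P1 \<le> 1*P1" by (rule mult_right_mono) (use y1 P1p in auto)
    then show ?thesis using dP' by linarith
  qed
  ultimately have "q^2 \<le> (cos \<phi>)^2 + \<delta>^2" using dec ycos by linarith
  also have "\<dots> \<le> (cos \<phi> + \<delta>)^2" using cp d0 by (simp add: power2_sum)
  finally have "q \<le> cos \<phi> + \<delta>" by (rule power2_le_imp_le) (use cp d0 in auto)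
  then have qb: "q \<le> pi/2 - \<phi> + \<delta>" using cb by linarith
  have q2: "q \<le> 2"
  proof -
    have "q^2 \<le> \<alpha>^2 + c*y" using q u0 y0 by simp
    also have "\<dots> \<le> 1 + 1"
    proof -
      have "\<alpha>^2 \<le> 1" using a0 a1 by (simp add: power_le_one)
      moreover have "c*y \<le> 1" using c1 y0 y1 by (rule mult_le_one)
      ultimately show ?thesis by linarith
    qed
    finally have "q^2 \<le> 2^2" by simp
    then show ?thesis by (rule power2_le_imp_le) simp
  qed
  have Db: "D \<le> 3"
  proof -
    have "u*y^2 \<le> u" using u0 y0 y1 by (simp add: mult_left_le power_le_one)
    moreover have "\<alpha>*q \<le> 1*2" by (rule mult_mono) (use a0 a1 q q2 in auto)
    ultimately show ?thesis unfolding D_def using uT' by linarith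
  qed
  have pos: "pi/2 - \<phi> + \<delta> > 0" using p2 d0 by linarith
  have "q * D \<le> (pi/2 - \<phi> + \<delta>) * 3" by (rule mult_mono) (use qb Db q Dp in auto)
  then have "1/(6*(pi/2-\<phi>+\<delta>)) \<le> (1/2) / (q*D)" using qD pos by (simp add: field_simps)
  also have "\<dots> \<le> M / (q*D)" by (rule divide_right_mono) (use Mh qD in auto)
  finally show "Hf \<alpha> \<theta> \<phi> \<ge> 1/(6*(pi/2-\<phi>+\<delta>))" unfolding H .
qed

lemma log_int:
  fixes \<delta> :: real assumes d0: "\<delta> > 0"
  shows "((\<lambda>\<phi>. 1/(6*(pi/2-\<phi>+\<delta>))) has_integral ((ln (1/4+\<delta>) - ln \<delta>)/6)) {pi/2-1/4..pi/2}"
proof -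
  define F where "F = (\<lambda>\<phi>::real. - ln (pi/2-\<phi>+\<delta>) / 6)"
  have "((\<lambda>\<phi>. 1/(6*(pi/2-\<phi>+\<delta>))) has_integral (F (pi/2) - F (pi/2-1/4))) {pi/2-1/4..pi/2}"
  proof (rule fundamental_theorem_of_calculus)
    show "pi/2-1/4 \<le> pi/2" by simp
    fix x assume x: "x \<in> {pi/2-1/4..pi/2}"
    then have p: "pi/2-x+\<delta> > 0" using d0 by auto
    have "(F has_real_derivative 1/(6*(pi/2-x+\<delta>))) (at x)"
      unfolding F_def using p by (auto intro!: derivative_eq_intros simp: field_simps)
    then show "(F has_vector_derivative 1/(6*(pi/2-x+\<delta>))) (at x within {pi/2-1/4..pi/2})"
      by (simp add: has_real_derivative_iff_has_vector_derivative has_vector_derivative_at_within)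
  qed
  moreover have "F (pi/2) - F (pi/2-1/4) = (ln (1/4+\<delta>) - ln \<delta>)/6"
    unfolding F_def by (simp add: field_simps)
  ultimately show ?thesis by simp
qed

lemma IB:
  assumes a0: "\<alpha> > 0" and a1: "\<alpha> \<le> 1" and g: "good \<alpha> \<theta>"
    and uT: "(Cconst \<alpha> \<theta>)^2 \<le> 1 - \<alpha>^2"
    and M0: "3*\<alpha>^2*(Cconst \<alpha> \<theta>)^2*(15/16) + ((Cconst \<alpha> \<theta>)^2)^2*(15/16)^3 - \<alpha>^2*cos (2*\<theta>) > 1/2"
    and dP: "\<alpha>^2 + cos (2*\<theta>) - (Cconst \<alpha> \<theta>)^2 < (exp (-(24*pi/\<alpha>+1))/4)^2"
  shows "integral {-pi/2..pi/2} (Hf \<alpha> \<theta>) > 0"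
proof -
  define L0 where "L0 = 24*pi/\<alpha>+1"
  define \<delta> where "\<delta> = exp (-L0)/4"
  have d0: "\<delta> > 0" unfolding \<delta>_def by simp
  have dP': "\<alpha>^2 + cos (2*\<theta>) - (Cconst \<alpha> \<theta>)^2 < \<delta>^2" using dP unfolding \<delta>_def L0_def .
  note hb = HB[OF a0 a1 g uT M0 d0 dP']
  define \<phi>0 where "\<phi>0 = pi/2 - 1/4"
  have ch: "continuous_on {-pi/2..pi/2} (Hf \<alpha> \<theta>)" by (rule H_cont1[OF a0 g])
  have int: "Hf \<alpha> \<theta> integrable_on {-pi/2..pi/2}" by (rule integrable_continuous_interval[OF ch])
  have le1: "-pi/2 \<le> \<phi>0" "\<phi>0 \<le> pi/2" unfolding \<phi>0_def using pi_gt3 by auto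
  have split: "integral {-pi/2..\<phi>0} (Hf \<alpha> \<theta>) + integral {\<phi>0..pi/2} (Hf \<alpha> \<theta>) = integral {-pi/2..pi/2} (Hf \<alpha> \<theta>)"
    by (rule Henstock_Kurzweil_Integration.integral_combine[OF le1 int])
  have int1: "Hf \<alpha> \<theta> integrable_on {-pi/2..\<phi>0}"
    by (rule integrable_continuous_interval) (rule continuous_on_subset[OF ch], use le1 in auto)
  have int2: "Hf \<alpha> \<theta> integrable_on {\<phi>0..pi/2}"
    by (rule integrable_continuous_interval) (rule continuous_on_subset[OF ch], use le1 in auto)
  have P1: "integral {-pi/2..\<phi>0} (Hf \<alpha> \<theta>) \<ge> integral {-pi/2..\<phi>0} (\<lambda>_. -4/\<alpha>)"
    by (rule integral_le[OF _ int1]) (use hb(1) in auto)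
  have c1: "integral {-pi/2..\<phi>0} (\<lambda>_. -4/\<alpha>) = (\<phi>0 + pi/2) * (-4/\<alpha>)"
    using le1 by simp
  have c1': "(\<phi>0 + pi/2) * (-4/\<alpha>) \<ge> pi * (-4/\<alpha>)"
    unfolding \<phi>0_def using a0 by (simp add: divide_simps)
  have li: "((\<lambda>\<phi>. 1/(6*(pi/2-\<phi>+\<delta>))) has_integral ((ln (1/4+\<delta>) - ln \<delta>)/6)) {\<phi>0..pi/2}"
    unfolding \<phi>0_def by (rule log_int[OF d0])
  have P2: "integral {\<phi>0..pi/2} (Hf \<alpha> \<theta>) \<ge> (ln (1/4+\<delta>) - ln \<delta>)/6"
  proof -
    have "integral {\<phi>0..pi/2} (\<lambda>\<phi>. 1/(6*(pi/2-\<phi>+\<delta>))) \<le> integral {\<phi>0..pi/2} (Hf \<alpha> \<theta>)"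
      by (rule integral_le[OF _ int2]) (use li hb(2) in \<open>auto simp: \<phi>0_def\<close>)
    then show ?thesis using li by (simp add: integral_unique)
  qed
  have ld: "ln \<delta> = - L0 + ln (1/4)" unfolding \<delta>_def by (simp add: ln_div)
  have l4: "ln (1/4) \<le> ln (1/4+\<delta>)" using d0 by simp
  have "(ln (1/4+\<delta>) - ln \<delta>)/6 \<ge> L0/6" using ld l4 by simp
  then have "integral {\<phi>0..pi/2} (Hf \<alpha> \<theta>) \<ge> 4*pi/\<alpha> + 1/6" using P2 unfolding L0_def by simp
  moreover have "pi * (-4/\<alpha>) = -(4*pi/\<alpha>)" by simp
  ultimately show ?thesis using split P1 c1 c1' by linarith
qed

lemma caseB': assumes a0: "\<alpha> > 0" and a2: "2*\<alpha>^2 \<le> 1"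
  shows "\<exists>\<theta>1. 0 < \<theta>1 \<and> good \<alpha> \<theta>1 \<and> integral {-pi/2..pi/2} (Hf \<alpha> \<theta>1) > 0"
proof -
  have a1: "\<alpha> \<le> 1"
  proof (rule ccontr)
    assume "\<not> \<alpha> \<le> 1"
    then have "1 < \<alpha>^2" by (simp add: one_less_power)
    then show False using a2 by simp
  qed
  define v where "v = 1 - 2*\<alpha>^2"
  have v: "0 \<le> v" "v \<le> 1" "-1 \<le> v" unfolding v_def using a2 by auto
  define T where "T = theta_plus \<alpha>"
  have Tdef: "T = arccos v / 2"
  proof (cases "\<alpha> > 1")
    case True then show ?thesis using a1 by simp
  next
    case False then show ?thesis unfolding T_def theta_plus_def v_def by simp
  qed
  have T0: "T > 0" unfolding T_def by (rule tp_pos[OF a0])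
  have T4: "T \<le> pi/4"
  proof -
    have "\<not> arccos v > pi/2"
    proof
      assume h: "arccos v > pi/2"
      have "cos (arccos v) < cos (pi/2)" using h arccos_bounded[of v] v
        by (intro cos_monotone_0_pi) auto
      then show False using v by simp
    qed
    then show ?thesis unfolding Tdef by simp
  qed
  have cT: "cos (2*T) = v" unfolding Tdef using v by simp
  define U where "U = (\<lambda>c::real. (1 - c^2) / (4*\<alpha>^2))"
  define Mx where "Mx = (\<lambda>c. 3*\<alpha>^2*U c*(15/16) + (U c)^2*(15/16)^3 - \<alpha>^2*c)"
  define Px where "Px = (\<lambda>c. \<alpha>^2 + c - U c)"
  have Uv: "U v = 1 - \<alpha>^2" unfolding U_def v_def using a0
    by (simp add: field_simps power2_eq_square)
  have Mv: "Mx v > 1/2"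
  proof -
    define a where "a = \<alpha>^2"
    have a0': "a \<ge> 0" unfolding a_def by simp
    have "Mx v = 3*\<alpha>^2*(1 - \<alpha>^2)*(15/16) + (1 - \<alpha>^2)^2*(15/16)^3 - \<alpha>^2* v"
      unfolding Mx_def by (simp add: Uv)
    also have "\<dots> = 3*a*(1-a)*(15/16) + (1-a)^2*(15/16)^3 - a*(1-2*a)"
      unfolding a_def v_def by simp
    also have "\<dots> = (47*a^2 + 674*a + 3375)/4096"
      by (simp add: field_simps power2_eq_square power3_eq_cube)
    finally have e: "Mx v = (47*a^2 + 674*a + 3375)/4096" .
    have "47*a^2 + 674*a \<ge> 0" using a0' by simp
    then show ?thesis unfolding e by simp
  qed
  have Pv: "Px v = 0" unfolding Px_def Uv by (simp add: v_def)
  have lc: "((\<lambda>\<theta>. cos (2*\<theta>)) \<longlongrightarrow> v) (at_left T)"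
  proof -
    have "((\<lambda>\<theta>. cos (2*\<theta>)) \<longlongrightarrow> cos (2*T)) (at_left T)" by (intro tendsto_intros)
    then show ?thesis using cT by simp
  qed
  have lM: "((\<lambda>\<theta>. Mx (cos (2*\<theta>))) \<longlongrightarrow> Mx v) (at_left T)"
    unfolding Mx_def U_def by (intro tendsto_intros lc) (use a0 in auto)
  have lP: "((\<lambda>\<theta>. Px (cos (2*\<theta>))) \<longlongrightarrow> Px v) (at_left T)"
    unfolding Px_def U_def by (intro tendsto_intros lc) (use a0 in auto)
  define \<delta> where "\<delta> = exp (-(24*pi/\<alpha>+1))/4"
  have d0: "\<delta>^2 > 0" unfolding \<delta>_def by simp
  have e1: "eventually (\<lambda>\<theta>. Mx (cos (2*\<theta>)) > 1/2) (at_left T)" by (rule order_tendstoD(1)[OF lM Mv])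
  have e2: "eventually (\<lambda>\<theta>. Px (cos (2*\<theta>)) < \<delta>^2) (at_left T)" using order_tendstoD(2)[OF lP] Pv d0 by simp
  have e3: "eventually (\<lambda>\<theta>. \<theta> \<in> {0<..<T}) (at_left T)" by (rule eventually_at_left_real[OF T0])
  obtain \<theta> where th: "Mx (cos (2*\<theta>)) > 1/2" "Px (cos (2*\<theta>)) < \<delta>^2" "\<theta> \<in> {0<..<T}"
    using eventually_happens'[OF trivial_limit_at_left_real eventually_conj[OF e1 eventually_conj[OF e2 e3]]] by auto
  have g: "good \<alpha> \<theta>" unfolding good_def using th(3) T4 unfolding T_def by auto
  have Ceq: "(Cconst \<alpha> \<theta>)^2 = U (cos (2*\<theta>))" unfolding U_def by (rule C2_eq[OF a0])
  have uT: "(Cconst \<alpha> \<theta>)^2 \<le> 1 - \<alpha>^2"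
  proof -
    have "cos (2*\<theta>) > v" using cos_gt[OF a0 g] unfolding v_def by simp
    then have "v^2 \<le> (cos (2*\<theta>))^2" using v by (intro power_mono) auto
    then have "U (cos (2*\<theta>)) \<le> U v" unfolding U_def using a0 by (intro divide_right_mono) auto
    then show ?thesis using Ceq Uv by simp
  qed
  have M0: "3*\<alpha>^2*(Cconst \<alpha> \<theta>)^2*(15/16) + ((Cconst \<alpha> \<theta>)^2)^2*(15/16)^3 - \<alpha>^2*cos (2*\<theta>) > 1/2"
    using th(1) unfolding Ceq Mx_def by simp
  have dP: "\<alpha>^2 + cos (2*\<theta>) - (Cconst \<alpha> \<theta>)^2 < (exp (-(24*pi/\<alpha>+1))/4)^2"
    using th(2) unfolding Ceq Px_def \<delta>_def by simp
  have "integral {-pi/2..pi/2} (Hf \<alpha> \<theta>) > 0" by (rule IB[OF a0 a1 g uT M0 dP])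
  then show ?thesis using th(3) g by auto
qed

lemma exist1: assumes "\<alpha> > 0"
  shows "\<exists>\<theta>1. 0 < \<theta>1 \<and> good \<alpha> \<theta>1 \<and> integral {-pi/2..pi/2} (Hf \<alpha> \<theta>1) > 0"
proof (cases "2*\<alpha>^2 > 1")
  case True then show ?thesis using caseA[OF assms True] by (intro exI[of _ "pi/4"]) auto
next
  case False then show ?thesis using caseB'[OF assms] by simp
qed

theorem lemma4p5:
  fixes \<alpha> :: real
  assumes "\<alpha> > 0"
  shows "\<exists>!\<theta>. \<theta> \<in> {0<..<theta_plus \<alpha>} \<inter> {0<..<pi/4} \<and> Lfun \<alpha> \<theta> = 0"
proof -
  define I where "I = (\<lambda>\<theta>. integral {-pi/2..pi/2} (Hf \<alpha> \<theta>))"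
  obtain \<theta>1 where t1: "0 < \<theta>1" "good \<alpha> \<theta>1" "I \<theta>1 > 0" using exist1[OF assms] unfolding I_def by auto
  have gU: "good \<alpha> \<theta>" if "\<theta> \<in> {0..\<theta>1}" for \<theta> using that t1(2) unfolding good_def by auto
  have "continuous_on {0..\<theta>1} (\<lambda>\<theta>. integral (cbox (-pi/2) (pi/2)) (Hf \<alpha> \<theta>))"
    by (rule integral_continuous_on_param) (rule H_cont[OF assms gU])
  then have cI: "continuous_on {0..\<theta>1} I" unfolding I_def by (simp add: cbox_interval)
  have I0: "I 0 < 0" unfolding I_def by (rule I0_neg[OF assms])
  obtain \<theta> where th: "0 \<le> \<theta>" "\<theta> \<le> \<theta>1" "I \<theta> = 0"
    using IVT'[of I 0 0 \<theta>1, OF _ _ _ cI] I0 t1 by auto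
  have "\<theta> \<noteq> 0" using th I0 by auto
  moreover have "\<theta> \<noteq> \<theta>1" using th t1 by auto
  ultimately have th2: "0 < \<theta>" "\<theta> < \<theta>1" using th by auto
  have gth: "good \<alpha> \<theta>" using gU th by auto
  have mem: "\<theta> \<in> {0<..<theta_plus \<alpha>} \<inter> {0<..<pi/4}" using th2 t1(2) unfolding good_def by auto
  have L0: "Lfun \<alpha> \<theta> = 0" using Lfun_eq[OF assms gth] th unfolding I_def by simp
  show ?thesis
  proof (rule ex1I[of _ \<theta>])
    show "\<theta> \<in> {0<..<theta_plus \<alpha>} \<inter> {0<..<pi/4} \<and> Lfun \<alpha> \<theta> = 0" using mem L0 by simp
  next
    fix \<theta>' assume h: "\<theta>' \<in> {0<..<theta_plus \<alpha>} \<inter> {0<..<pi/4} \<and> Lfun \<alpha> \<theta>' = 0"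
    then have g': "good \<alpha> \<theta>'" unfolding good_def by auto
    have L': "I \<theta>' = 0" using h Lfun_eq[OF assms g'] unfolding I_def by simp
    show "\<theta>' = \<theta>"
    proof (rule ccontr)
      assume "\<theta>' \<noteq> \<theta>"
      then consider "\<theta>' < \<theta>" | "\<theta> < \<theta>'" by linarith
      then show False
      proof cases
        case 1 then show False using I_mono[OF assms g' gth] L' th unfolding I_def by simp
      next
        case 2 then show False using I_mono[OF assms gth g'] L' th unfolding I_def by simp
      qed
    qed
  qed
qed

end
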